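(* Consider the sequences $(x_k),(y_k),(\nu_k),(\lambda_k)$ generated by Algorithm 2 (described in the context), and assume that at iteration $k\ge1$ the pair $(y_k,\nu_k)$ is computed in the approximate-solution branch, so that $\nu_k\in N_C(y_k)$ and $\|\lambda_k(F_{y_{k-1}}(y_k)+\nu_k)+y_k-x_{k-1}\|\le\hat\sigma\|y_k-y_{k-1}\|$. Then $$\frac{\lambda_kL}{2}\big\|\lambda_k(F(y_{k-1})+\nu_{k-1})+y_{k-1}-x_{k-1}\big\|\le\theta\ \Longrightarrow\ \frac{\lambda_kL}{2}\big\|\lambda_k(F(y_k)+\nu_k)+y_k-x_{k-1}\big\|\le\hat\theta.$$
   Context: Setting: $\mathcal H$ real Hilbert space; $C\subseteq\mathcal H$ nonempty closed convex; $N_C(x)=\{\nu:\langle\nu,y-x\rangle\le0\ \forall y\in C\}$ if $x\in C$, $N_C(x)=\emptyset$ otherwise. $F:C\to\mathcal H$ is monotone, continuously differentiable, and $\|F'(x)-F'(y)\|\le L\|x-y\|$ for all $x,y\in C$, with $L>0$; the set of $x$ with $0\in F(x)+N_C(x)$ is nonempty. For $y\in C$, $F_y(x):=F(y)+F'(y)(x-y)$. Parameters: $0\le\hat\sigma<1/2$; $0<\theta<(1-\hat\sigma)(1-2\hat\sigma)$; $\hat\theta:=\theta\big(\frac{\hat\sigma}{1-\hat\sigma}+\frac{\theta}{(1-\hat\sigma)^2}\big)$; $\eta>2\hat\theta/L$; $\tau:=\dfrac{2(\theta-\hat\theta)}{2\theta+\frac{\eta L}{2}+\sqrt{(2\theta+\frac{\eta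 L}{2})^2-4\theta(\theta-\hat\theta)}}$. Algorithm 2: input $x_0\in C$, $y_0:=x_0$, $\nu_0:=0$, $\lambda_1>0$ with $\lambda_1^2\|F(y_0)\|\le2\theta/L$. For $k=1,2,\dots$: if $F(y_{k-1})+\nu_{k-1}=0$, stop and return $y_{k-1}$. If $\frac{\lambda_kL}{2}\|\lambda_k(F(y_{k-1})+\nu_{k-1})+y_{k-1}-x_{k-1}\|\le\hat\theta$, set $y_k=y_{k-1}$, $\nu_k=\nu_{k-1}$; otherwise (approximate-solution branch) find any $(y_k,\nu_k)$ with $\nu_k\in N_C(y_k)$ and $\|\lambda_k(F_{y_{k-1}}(y_k)+\nu_k)+y_k-x_{k-1}\|\le\hat\sigma\|y_k-y_{k-1}\|$. Then, if $\lambda_k\|y_k-x_{k-1}\|\ge\eta$, set $x_k=x_{k-1}-\tau\lambda_k(F(y_k)+\nu_k)$ and $\lambda_{k+1}=(1-\tau)\lambda_k$; else set $x_k=x_{k-1}$ and $\lambda_{k+1}=\lambda_k/(1-\tau)$. Standing assumption: the algorithm never stops at the first test, i.e. $F(y_{k-1})+\nu_{k-1}\neq0$ for all $k$. *)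

theory Defs
  imports "HOL-Analysis.Analysis"
begin

definition normal_cone :: "'a::real_inner set \<Rightarrow> 'a \<Rightarrow> 'a set" where
  "normal_cone C x = (if x \<in> C then {v. \<forall>y\<in>C. v \<bullet> (y - x) \<le> 0} else {})"

definition linearization :: "('a::real_normed_vector \<Rightarrow> 'a) \<Rightarrow> ('a \<Rightarrow> ('a \<Rightarrow>\<^sub>L 'a)) \<Rightarrow> 'a \<Rightarrow> 'a \<Rightarrow> 'a" where
  "linearization F F' y x = F y + blinfun_apply (F' y) (x - y)"

end

theory Submission
  imports Defs
begin

lemma taylor_bound:
  fixes C :: "'a::real_normed_vector set" and F :: "'a \<Rightarrow> 'a" and F' :: "'a \<Rightarrow> ('a \<Rightarrow>\<^sub>L 'a)"
  assumes cvx: "convex C"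
    and der: "\<forall>u\<in>C. (F has_derivative blinfun_apply (F' u)) (at u within C)"
    and lip: "\<forall>u\<in>C. \<forall>w\<in>C. norm (F' u - F' w) \<le> L * norm (u - w)"
    and u: "u \<in> C" and w: "w \<in> C"
  shows "norm (F w - F u - F' u (w - u)) \<le> L / 2 * norm (w - u)^2"
proof -
  define d where "d = w - u"
  define g where "g t = u + t *\<^sub>R d" for t :: real
  define h where "h t = F (g t) - t *\<^sub>R F' u d" for t
  define \<phi> where "\<phi> t = L / 2 * norm d ^ 2 * t ^ 2" for t :: real
  have gC: "g t \<in> C" if "0 \<le> t" "t \<le> 1" for t
  proof -
    have "g t = (1 - t) *\<^sub>R u + t *\<^sub>R w" by (simp add: g_def d_def algebra_simps)
    thus ?thesis using cvx u w that by (simp add: convex_def)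
  qed
  have Fc: "continuous_on C F" by (rule has_derivative_continuous_on) (use der in blast)
  have gc: "continuous_on {0..1} g" unfolding g_def by (intro continuous_intros)
  have "continuous_on {0..1} (\<lambda>t. F (g t))"
    by (rule continuous_on_compose2[OF Fc gc]) (auto intro: gC)
  hence hc: "continuous_on {0..1} h" unfolding h_def
    by (intro continuous_on_diff continuous_on_scaleR continuous_on_id continuous_on_const)
  have phic: "continuous_on {0..1} \<phi>" unfolding \<phi>_def by (intro continuous_intros)
  have hd: "(h has_vector_derivative (F' (g t) d - F' u d)) (at t)" if t: "0 < t" "t < 1" for t
  proof -
    have g': "(g has_derivative (\<lambda>s. s *\<^sub>R d)) (at t within {0<..<1})"
      unfolding g_def by (auto intro!: derivative_eq_intros)
    have "(F has_derivative blinfun_apply (F' (g t))) (at (g t) within g ` {0<..<1})"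
      by (rule has_derivative_subset[of _ _ _ C]) (use der gC t in auto)
    from diff_chain_within[OF g' this]
    have "((F \<circ> g) has_derivative (\<lambda>s. F' (g t) (s *\<^sub>R d))) (at t within {0<..<1})"
      by (simp add: o_def)
    hence "((F \<circ> g) has_derivative (\<lambda>s. F' (g t) (s *\<^sub>R d))) (at t)"
      using at_within_open[of t "{0<..<1}"] t by simp
    hence "((\<lambda>t. F (g t)) has_vector_derivative F' (g t) d) (at t)"
      by (simp add: has_vector_derivative_def o_def blinfun.scaleR_right)
    moreover have "((\<lambda>t. t *\<^sub>R F' u d) has_vector_derivative F' u d) (at t)"
      by (auto intro!: derivative_eq_intros)
    ultimately show ?thesis unfolding h_def by (rule has_vector_derivative_diff)
  qed
  have pd: "(\<phi> has_vector_derivative (L * norm d ^ 2 * t)) (at t)" for t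
    unfolding \<phi>_def has_real_derivative_iff_has_vector_derivative[symmetric]
    by (auto intro!: derivative_eq_intros)
  have bnd: "norm (F' (g t) d - F' u d) \<le> L * norm d ^ 2 * t" if t: "0 < t" "t < 1" for t
  proof -
    have "norm (F' (g t) d - F' u d) = norm ((F' (g t) - F' u) d)"
      by (simp add: blinfun.diff_left)
    also have "\<dots> \<le> norm (F' (g t) - F' u) * norm d" by (rule norm_blinfun)
    also have "\<dots> \<le> (L * norm (g t - u)) * norm d"
      using lip gC[of t] u t by (intro mult_right_mono) auto
    also have "\<dots> = L * norm d ^ 2 * t" using t by (simp add: g_def power2_eq_square)
    finally show ?thesis .
  qed
  have "norm (h 1 - h 0) \<le> \<phi> 1 - \<phi> 0"
    by (rule differentiable_bound_general[OF zero_less_one hc phic hd pd bnd])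
  thus ?thesis by (simp add: h_def g_def \<phi>_def d_def algebra_simps)
qed


lemma psd_lemma:
  fixes C :: "'a::real_inner set" and F :: "'a \<Rightarrow> 'a" and F' :: "'a \<Rightarrow> ('a \<Rightarrow>\<^sub>L 'a)"
  assumes cvx: "convex C"
    and mono: "\<forall>u\<in>C. \<forall>w\<in>C. 0 \<le> (F u - F w) \<bullet> (u - w)"
    and der: "\<forall>u\<in>C. (F has_derivative blinfun_apply (F' u)) (at u within C)"
    and lip: "\<forall>u\<in>C. \<forall>w\<in>C. norm (F' u - F' w) \<le> L * norm (u - w)"
    and L: "L > 0"
    and u: "u \<in> C" and w: "w \<in> C"
  shows "0 \<le> F' u (w - u) \<bullet> (w - u)"
proof (rule ccontr)
  define d where "d = w - u"
  define q where "q = F' u d \<bullet> d"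
  define s where "s = norm d"
  assume "\<not> ?thesis"
  hence q: "q < 0" by (simp add: q_def d_def)
  hence "d \<noteq> 0" by (auto simp: q_def)
  hence s: "s > 0" by (simp add: s_def)
  have key: "q \<ge> - L / 2 * t * s ^ 3" if t: "0 < t" "t \<le> 1" for t
  proof -
    define z where "z = u + t *\<^sub>R d"
    have "z = (1 - t) *\<^sub>R u + t *\<^sub>R w" by (simp add: z_def d_def algebra_simps)
    hence zC: "z \<in> C" using cvx u w t by (simp add: convex_def)
    define e where "e = F z - F u - F' u (z - u)"
    have e: "norm e \<le> L / 2 * norm (z - u) ^ 2"
      unfolding e_def by (rule taylor_bound[OF cvx der lip u zC])
    have zu: "z - u = t *\<^sub>R d" by (simp add: z_def)
    have nzu: "norm (z - u) = t * s" using t by (simp add: zu s_def)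
    have "0 \<le> (F z - F u) \<bullet> (z - u)" using mono zC u by blast
    also have "F z - F u = F' u (z - u) + e" by (simp add: e_def)
    also have "(F' u (z - u) + e) \<bullet> (z - u) = t^2 * q + e \<bullet> (z - u)"
      by (simp add: zu q_def blinfun.scaleR_right inner_add_left power2_eq_square algebra_simps)
    finally have 1: "0 \<le> t^2 * q + e \<bullet> (z - u)" .
    have "e \<bullet> (z - u) \<le> norm e * norm (z - u)" by (rule norm_cauchy_schwarz)
    also have "\<dots> \<le> (L / 2 * norm (z - u) ^ 2) * norm (z - u)"
      by (rule mult_right_mono[OF e]) simp
    also have "\<dots> = t^2 * (L / 2 * t * s ^ 3)" by (simp add: nzu power2_eq_square power3_eq_cube)
    finally have "0 \<le> t^2 * (q + L / 2 * t * s ^ 3)" using 1 by (simp add: algebra_simps)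
    hence "0 \<le> q + L / 2 * t * s ^ 3" using t by (simp add: zero_le_mult_iff)
    thus ?thesis by simp
  qed
  define t where "t = min 1 (- q / (L * s ^ 3))"
  have Ls: "L * s ^ 3 > 0" using L s by simp
  have t0: "0 < t" using q Ls by (simp add: t_def divide_neg_pos)
  have t1: "t \<le> 1" by (simp add: t_def)
  have "t \<le> - q / (L * s ^ 3)" by (simp add: t_def)
  hence "t * (L * s^3) \<le> (- q / (L * s ^ 3)) * (L * s ^ 3)" using Ls by (intro mult_right_mono) auto
  moreover have "(- q / (L * s ^ 3)) * (L * s ^ 3) = - q" 
  proof -
    have gen: "\<And>a b::real. b \<noteq> 0 \<Longrightarrow> a / b * b = a" by simp
    show ?thesis by (rule gen) (use Ls in linarith)
  qed
  ultimately have "t * (L * s^3) \<le> - q" by simp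
  moreover have "q \<ge> - L / 2 * t * s ^ 3" by (rule key[OF t0 t1])
  ultimately show False using q by (simp add: algebra_simps)
qed

theorem proposition4p2:
  fixes C :: "'a::{real_inner, complete_space} set"
    and F :: "'a \<Rightarrow> 'a" and F' :: "'a \<Rightarrow> ('a \<Rightarrow>\<^sub>L 'a)"
    and L \<sigma>h \<theta> \<theta>h \<eta> \<tau> :: real
    and x y \<nu> :: "nat \<Rightarrow> 'a" and lam :: "nat \<Rightarrow> real" and k :: nat
  assumes C_ne: "C \<noteq> {}" and C_closed: "closed C" and C_convex: "convex C"
    and F_mono: "\<forall>u\<in>C. \<forall>w\<in>C. 0 \<le> (F u - F w) \<bullet> (u - w)"
    and F_deriv: "\<forall>u\<in>C. (F has_derivative blinfun_apply (F' u)) (at u within C)"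
    and F'_cont: "continuous_on C F'"
    and L_pos: "L > 0"
    and F'_lip: "\<forall>u\<in>C. \<forall>w\<in>C. norm (F' u - F' w) \<le> L * norm (u - w)"
    and sol_ne: "\<exists>u\<in>C. - F u \<in> normal_cone C u"
    and \<sigma>h: "0 \<le> \<sigma>h" "\<sigma>h < 1/2"
    and \<theta>: "0 < \<theta>" "\<theta> < (1 - \<sigma>h) * (1 - 2 * \<sigma>h)"
    and \<theta>h_def: "\<theta>h = \<theta> * (\<sigma>h / (1 - \<sigma>h) + \<theta> / (1 - \<sigma>h)\<^sup>2)"
    and \<eta>: "\<eta> > 2 * \<theta>h / L"
    and \<tau>_def: "\<tau> = 2 * (\<theta> - \<theta>h) /
        (2 * \<theta> + \<eta> * L / 2 + sqrt ((2 * \<theta> + \<eta> * L / 2)\<^sup>2 - 4 * \<theta> * (\<theta> - \<theta>h)))"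
    and x0: "x 0 \<in> C" and y0: "y 0 = x 0" and \<nu>0: "\<nu> 0 = 0"
    and lam1: "lam 1 > 0" "(lam 1)\<^sup>2 * norm (F (y 0)) \<le> 2 * \<theta> / L"
    and no_stop: "\<forall>j\<ge>1. F (y (j - 1)) + \<nu> (j - 1) \<noteq> 0"
    and step_y: "\<forall>j\<ge>1.
       (if lam j * L / 2 * norm (lam j *\<^sub>R (F (y (j - 1)) + \<nu> (j - 1)) + y (j - 1) - x (j - 1)) \<le> \<theta>h
        then y j = y (j - 1) \<and> \<nu> j = \<nu> (j - 1)
        else \<nu> j \<in> normal_cone C (y j) \<and>
             norm (lam j *\<^sub>R (linearization F F' (y (j - 1)) (y j) + \<nu> j) + y j - x (j - 1))
               \<le> \<sigma>h * norm (y j - y (j - 1)))"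
    and step_x: "\<forall>j\<ge>1.
       (if lam j * norm (y j - x (j - 1)) \<ge> \<eta>
        then x j = x (j - 1) - (\<tau> * lam j) *\<^sub>R (F (y j) + \<nu> j) \<and> lam (j + 1) = (1 - \<tau>) * lam j
        else x j = x (j - 1) \<and> lam (j + 1) = lam j / (1 - \<tau>))"
    and k: "k \<ge> 1"
    and branch: "\<not> (lam k * L / 2 * norm (lam k *\<^sub>R (F (y (k - 1)) + \<nu> (k - 1)) + y (k - 1) - x (k - 1)) \<le> \<theta>h)"
  shows "lam k * L / 2 * norm (lam k *\<^sub>R (F (y (k - 1)) + \<nu> (k - 1)) + y (k - 1) - x (k - 1)) \<le> \<theta>
     \<longrightarrow> lam k * L / 2 * norm (lam k *\<^sub>R (F (y k) + \<nu> k) + y k - x (k - 1)) \<le> \<theta>h"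
proof
  assume H: "lam k * L / 2 * norm (lam k *\<^sub>R (F (y (k - 1)) + \<nu> (k - 1)) + y (k - 1) - x (k - 1)) \<le> \<theta>"
  have inv: "y j \<in> C \<and> \<nu> j \<in> normal_cone C (y j)" for j
  proof (induction j)
    case 0
    then show ?case using x0 y0 \<nu>0 by (simp add: normal_cone_def)
  next
    case (Suc j)
    have "Suc j \<ge> 1" by simp
    with step_y have S: "(if lam (Suc j) * L / 2 * norm (lam (Suc j) *\<^sub>R (F (y j) + \<nu> j) + y j - x j) \<le> \<theta>h
        then y (Suc j) = y j \<and> \<nu> (Suc j) = \<nu> j
        else \<nu> (Suc j) \<in> normal_cone C (y (Suc j)) \<and>
             norm (lam (Suc j) *\<^sub>R (linearization F F' (y j) (y (Suc j)) + \<nu> (Suc j)) + y (Suc j) - x j)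
               \<le> \<sigma>h * norm (y (Suc j) - y j))" by (metis diff_Suc_1)
    show ?case
    proof (cases "lam (Suc j) * L / 2 * norm (lam (Suc j) *\<^sub>R (F (y j) + \<nu> j) + y j - x j) \<le> \<theta>h")
      case True
      then show ?thesis using S Suc.IH by simp
    next
      case False
      then have "\<nu> (Suc j) \<in> normal_cone C (y (Suc j))" using S by simp
      then show ?thesis by (simp add: normal_cone_def split: if_splits)
    qed
  qed
  define j where "j = k - 1"
  have kj: "k = Suc j" using k by (simp add: j_def)
  define lm where "lm = lam k"
  define yp where "yp = y j"
  define np where "np = \<nu> j"
  define xp where "xp = x j"
  define yk where "yk = y k"
  define nk where "nk = \<nu> k"
  define d where "d = yk - yp"
  define s where "s = norm d"
  define a where "a = lm *\<^sub>R (F yp + np) + yp - xp"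
  define r where "r = lm *\<^sub>R (linearization F F' yp yk + nk) + yk - xp"
  have Sk: "\<nu> k \<in> normal_cone C (y k) \<and>
             norm (lam k *\<^sub>R (linearization F F' (y (k - 1)) (y k) + \<nu> k) + y k - x (k - 1))
               \<le> \<sigma>h * norm (y k - y (k - 1))"
    using step_y k branch by (metis (no_types, lifting))
  have nk: "nk \<in> normal_cone C yk" and r: "norm r \<le> \<sigma>h * s"
    using Sk by (simp_all add: nk_def yk_def r_def lm_def yp_def xp_def j_def s_def d_def)
  have ykC: "yk \<in> C" using nk by (simp add: normal_cone_def split: if_splits)
  have ypC: "yp \<in> C" and np: "np \<in> normal_cone C yp" using inv[of j] by (simp_all add: yp_def np_def)
  have Ha: "lm * L / 2 * norm a \<le> \<theta>" using H by (simp add: a_def lm_def yp_def np_def xp_def j_def)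
  have \<theta>h0: "0 \<le> \<theta>h" using \<sigma>h \<theta> by (simp add: \<theta>h_def)
  show "lam k * L / 2 * norm (lam k *\<^sub>R (F (y k) + \<nu> k) + y k - x (k - 1)) \<le> \<theta>h"
  proof (cases "lm \<le> 0")
    case True
    have "lam k * L \<le> 0" using True L_pos by (simp add: lm_def mult_nonpos_nonneg)
    hence "lam k * L / 2 \<le> 0" by simp
    hence "lam k * L / 2 * norm (lam k *\<^sub>R (F (y k) + \<nu> k) + y k - x (k - 1)) \<le> 0"
      by (simp add: mult_nonpos_nonneg)
    then show ?thesis using \<theta>h0 by linarith
  next
    case False
    hence lm: "lm > 0" by simp
    have psd: "0 \<le> F' yp d \<bullet> d"
      unfolding d_def by (rule psd_lemma[OF C_convex F_mono F_deriv F'_lip L_pos ypC ykC])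
    have nn: "0 \<le> (nk - np) \<bullet> d"
    proof -
      have "nk \<bullet> (yp - yk) \<le> 0" using nk ypC by (auto simp: normal_cone_def split: if_splits)
      moreover have "np \<bullet> (yk - yp) \<le> 0" using np ykC by (auto simp: normal_cone_def split: if_splits)
      ultimately show ?thesis unfolding d_def
        by (simp add: inner_diff_left inner_diff_right inner_commute)
    qed
    have id: "r - a = lm *\<^sub>R (F' yp d + (nk - np)) + d"
      by (simp add: r_def a_def linearization_def d_def algebra_simps)
    have "(r - a) \<bullet> d = lm * (F' yp d \<bullet> d) + lm * ((nk - np) \<bullet> d) + s^2"
      by (simp add: id inner_add_left s_def power2_norm_eq_inner algebra_simps)
    moreover have "0 \<le> lm * (F' yp d \<bullet> d)" using psd lm by simp
    moreover have "0 \<le> lm * ((nk - np) \<bullet> d)" using nn lm by simp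
    ultimately have "s^2 \<le> (r - a) \<bullet> d" by linarith
    also have "\<dots> \<le> norm (r - a) * s" unfolding s_def by (rule norm_cauchy_schwarz)
    also have "\<dots> \<le> (\<sigma>h * s + norm a) * s"
      by (rule mult_right_mono) (use r norm_triangle_ineq4[of r a] in \<open>auto simp: s_def\<close>)
    finally have "s * s \<le> (\<sigma>h * s + norm a) * s" by (simp add: power2_eq_square)
    hence sa: "(1 - \<sigma>h) * s \<le> norm a"
    proof (cases "s = 0")
      case True then show ?thesis by simp
    next
      case False
      hence "s > 0" by (simp add: s_def)
      with \<open>s * s \<le> _\<close> have "s \<le> \<sigma>h * s + norm a" by (rule mult_right_le_imp_le)
      then show ?thesis by (simp add: algebra_simps)
    qed
    have tb: "norm (F yk - linearization F F' yp yk) \<le> L / 2 * s^2"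
      using taylor_bound[OF C_convex F_deriv F'_lip ypC ykC]
      by (simp add: linearization_def s_def d_def algebra_simps)
    have tv: "lm *\<^sub>R (F yk + nk) + yk - xp = r + lm *\<^sub>R (F yk - linearization F F' yp yk)"
      by (simp add: r_def algebra_simps)
    have nb: "norm (lm *\<^sub>R (F yk + nk) + yk - xp) \<le> \<sigma>h * s + lm * (L / 2 * s^2)"
    proof -
      have "norm (lm *\<^sub>R (F yk + nk) + yk - xp) \<le> norm r + norm (lm *\<^sub>R (F yk - linearization F F' yp yk))"
        unfolding tv by (rule norm_triangle_ineq)
      also have "\<dots> \<le> \<sigma>h * s + lm * (L / 2 * s^2)"
      proof (rule add_mono[OF r])
        have "norm (lm *\<^sub>R (F yk - linearization F F' yp yk)) = lm * norm (F yk - linearization F F' yp yk)"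
          using lm by simp
        also have "\<dots> \<le> lm * (L / 2 * s^2)" using lm by (intro mult_left_mono[OF tb]) simp
        finally show "norm (lm *\<^sub>R (F yk - linearization F F' yp yk)) \<le> lm * (L / 2 * s^2)" .
      qed
      finally show ?thesis .
    qed
    define Sv where "Sv = lm * L / 2 * s"
    define A where "A = lm * L / 2 * norm a"
    have Sv0: "0 \<le> Sv" using lm L_pos by (simp add: Sv_def s_def)
    have c: "0 < lm * L / 2" using lm L_pos by simp
    have "(1 - \<sigma>h) * Sv \<le> A" using mult_left_mono[OF sa less_imp_le[OF c]]
      by (simp add: Sv_def A_def algebra_simps)
    hence Sb: "Sv \<le> \<theta> / (1 - \<sigma>h)" using Ha \<sigma>h by (simp add: A_def pos_le_divide_eq mult.commute)
    have "lm * L / 2 * norm (lm *\<^sub>R (F yk + nk) + yk - xp) \<le> lm * L / 2 * (\<sigma>h * s + lm * (L / 2 * s^2))"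
      by (rule mult_left_mono) (use nb c in auto)
    also have "\<dots> = \<sigma>h * Sv + Sv^2" by (simp add: Sv_def power2_eq_square algebra_simps)
    also have "\<dots> \<le> \<sigma>h * (\<theta> / (1 - \<sigma>h)) + (\<theta> / (1 - \<sigma>h))^2"
      using Sb Sv0 \<sigma>h by (intro add_mono mult_left_mono power_mono) auto
    also have "\<dots> = \<theta>h" by (simp add: \<theta>h_def power_divide algebra_simps power2_eq_square)
    finally show ?thesis by (simp add: lm_def yk_def nk_def xp_def j_def)
  qed
qed

end
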